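(* Let $n_q\ge 1$ and let $u:\{1,\dots,n_q\}\times\{1,\dots,n_q\}\to\mathbb{R}$ be such that for every item $i$, $u(i,\cdot)$ is monotonically decreasing in the position argument. Let $s_1,\dots,s_{n_q}$ be pairwise distinct real scores and let $k_i\in\{1,\dots,n_q\}$ be the position of item $i$ when items are sorted by score in descending order (so $k_i = 1+|\{j: s_j>s_i\}|$). Let $k^*=(k^*_1,\dots,k^*_{n_q})$ be a permutation of $\{1,\dots,n_q\}$ maximizing $\sum_{i=1}^{n_q} u(i,k^*_i)$. Define $$\mathcal{L}_r = \sum_{i=1}^{n_q} u(i,k_i^* ) - \sum_{i=1}^{n_q} u(i,k_i), \qquad \mathcal{L}''_r = \sum_{i=1}^{n_q}\sum_{j:\,s_i<s_j} \left|u(i,k_j)-u(i,k_i)\right|.$$ Then $\mathcal{L}_r \le \mathcal{L}''_r$.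
   Context: In the intended application, $u(i,k)=c_{i,k_i^h}\cdot \frac{P(c_{i,k}=1)}{P(c_{i,k_i^h}=1)}\cdot b_i$ is the (debiased) utility of displaying item $i$ at position $k$ ($k_i^h$ the logged position, $c_{i,k_i^h}$ the observed click, $b_i$ the item's utility value), $s_i=\Phi(f_i,b_i)$ are scores of a scoring function $\Phi$, and $k^*$ is the optimal (maximum-weight matching) assignment of items to positions; $\mathcal{L}_r$ is the utility regret of the ranking induced by the scores. *)

theory Defs
  imports Main "HOL.Real"
begin

definition rank_pos :: "nat \<Rightarrow> (nat \<Rightarrow> real) \<Rightarrow> nat \<Rightarrow> nat" where
  "rank_pos n s i = 1 + card {j \<in> {1..n}. s j > s i}"

end

theory Submission
  imports Defs
begin

theorem theorem2:
  fixes n :: nat and u :: "nat \<Rightarrow> nat \<Rightarrow> real" and s :: "nat \<Rightarrow> real"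
    and kstar :: "nat \<Rightarrow> nat"
  assumes n_pos: "n \<ge> 1"
    and u_mono: "\<And>i p q. i \<in> {1..n} \<Longrightarrow> p \<in> {1..n} \<Longrightarrow> q \<in> {1..n} \<Longrightarrow> p \<le> q \<Longrightarrow> u i q \<le> u i p"
    and s_distinct: "inj_on s {1..n}"
    and kstar_perm: "bij_betw kstar {1..n} {1..n}"
    and kstar_opt: "\<And>\<sigma>. bij_betw \<sigma> {1..n} {1..n} \<Longrightarrow>
                      (\<Sum>i\<in>{1..n}. u i (\<sigma> i)) \<le> (\<Sum>i\<in>{1..n}. u i (kstar i))"
  shows "(\<Sum>i\<in>{1..n}. u i (kstar i)) - (\<Sum>i\<in>{1..n}. u i (rank_pos n s i))
         \<le> (\<Sum>i\<in>{1..n}. \<Sum>j\<in>{j \<in> {1..n}. s i < s j}. \<bar>u i (rank_pos n s j) - u i (rank_pos n s i)\<bar>)"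
proof -
  obtain j0 where j0: "j0 \<in> {1..n}" "\<And>j. j \<in> {1..n} \<Longrightarrow> s j \<le> s j0"
  proof -
    have "finite (s ` {1..n})" "s ` {1..n} \<noteq> {}" using n_pos by auto
    then have "Max (s ` {1..n}) \<in> s ` {1..n}" by (rule Max_in)
    then obtain j0 where "j0 \<in> {1..n}" "s j0 = Max (s ` {1..n})" by auto
    then show ?thesis using that by (metis Max_ge finite_atLeastAtMost finite_imageI imageI)
  qed
  have r0: "rank_pos n s j0 = 1"
    unfolding rank_pos_def using j0 by (auto simp: not_less)
  have termb: "u i (kstar i) - u i (rank_pos n s i)
      \<le> (\<Sum>j\<in>{j \<in> {1..n}. s i < s j}. \<bar>u i (rank_pos n s j) - u i (rank_pos n s i)\<bar>)"
    if i: "i \<in> {1..n}" for i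
  proof -
    have ks: "kstar i \<in> {1..n}" using kstar_perm i by (auto simp: bij_betw_def)
    have one: "1 \<in> {1..n}" using n_pos by auto
    have "card {j \<in> {1..n}. s j > s i} \<le> card ({1..n} - {i})"
      by (rule card_mono) auto
    also have "\<dots> = n - 1" using i by simp
    finally have "rank_pos n s i \<le> n" unfolding rank_pos_def using n_pos by simp
    then have ri: "rank_pos n s i \<in> {1..n}" unfolding rank_pos_def by simp
    have uk: "u i (kstar i) \<le> u i 1" using u_mono[OF i one ks] ks by simp
    have nn: "0 \<le> (\<Sum>j\<in>{j \<in> {1..n}. s i < s j}. \<bar>u i (rank_pos n s j) - u i (rank_pos n s i)\<bar>)"
      by (rule sum_nonneg) simp
    show ?thesis
    proof (cases "s i < s j0")
      case True
      then have jm: "j0 \<in> {j \<in> {1..n}. s i < s j}" using j0 by simp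
      have "u i (kstar i) - u i (rank_pos n s i) \<le> \<bar>u i (rank_pos n s j0) - u i (rank_pos n s i)\<bar>"
        using uk r0 by simp
      also have "\<dots> \<le> (\<Sum>j\<in>{j \<in> {1..n}. s i < s j}. \<bar>u i (rank_pos n s j) - u i (rank_pos n s i)\<bar>)"
        by (rule member_le_sum[OF jm]) auto
      finally show ?thesis .
    next
      case False
      then have "{j \<in> {1..n}. s j > s i} = {}" using j0 by force
      then have "rank_pos n s i = 1" unfolding rank_pos_def by simp
      then have "u i (kstar i) - u i (rank_pos n s i) \<le> 0" using uk by simp
      then show ?thesis using nn by linarith
    qed
  qed
  show ?thesis unfolding sum_subtractf[symmetric] by (rule sum_mono) (rule termb, simp)
qed

end
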